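(* Let $\beta\in(0,1)$, let $G=(V,E)$ be an $n$-vertex graph, let $P_1\subseteq[\lfloor\beta n\rfloor]$ with $|P_1|=l\ge 1$ and $t_1:=\max P_1$, let $p_1<p_2$ be positions in $[\lfloor\beta n\rfloor]\setminus P_1$ with $t_1<p_1$, and let $S\subseteq[\lfloor\beta n\rfloor]\setminus(P_1\cup\{p_2\})$ with $p_1\in S$. Let $\pi$ be a uniformly random bijection $[n]\to V$ and $\sigma\colon S\to V$ any injective map. Then the conditional probability, given $\pi|_S=\sigma$, that $\pi(p_1)$ and $\pi(p_2)$ are adjacent and both alive in step $t_1+1$ is at most $\frac{1}{e\cdot l\cdot(1-\beta)}$.
   Context: Given a bijection $\pi\colon[n]\to V$, the sequential greedy algorithm processes steps $t=1,\dots,n$: initially all vertices are alive; in step $t$, if $\pi(t)$ is alive, it is added to the independent set and $\pi(t)$ together with all its neighbors become dead for all later steps; if $\pi(t)$ is dead, nothing happens. A vertex is alive in step $t$ if it has not become dead in any step $t'<t$. *)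

theory Defs
  imports "HOL-Probability.Probability"
begin

definition simple_graph :: "'a set \<Rightarrow> ('a \<Rightarrow> 'a \<Rightarrow> bool) \<Rightarrow> bool" where
  "simple_graph V E \<longleftrightarrow> finite V \<and> (\<forall>u v. E u v \<longrightarrow> E v u)
     \<and> (\<forall>u. \<not> E u u) \<and> (\<forall>u v. E u v \<longrightarrow> u \<in> V \<and> v \<in> V)"

definition bijections :: "nat \<Rightarrow> 'a set \<Rightarrow> (nat \<Rightarrow> 'a) set" where
  "bijections n V = {\<pi>. \<pi> \<in> {1..n} \<rightarrow>\<^sub>E V \<and> bij_betw \<pi> {1..n} V}"

fun greedy_dead :: "('a \<Rightarrow> 'a \<Rightarrow> bool) \<Rightarrow> (nat \<Rightarrow> 'a) \<Rightarrow> nat \<Rightarrow> 'a set" where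
  "greedy_dead E \<pi> 0 = {}"
| "greedy_dead E \<pi> (Suc t) =
     (if \<pi> (Suc t) \<notin> greedy_dead E \<pi> t
      then greedy_dead E \<pi> t \<union> {\<pi> (Suc t)} \<union> {v. E (\<pi> (Suc t)) v}
      else greedy_dead E \<pi> t)"

text \<open>Vertex v is alive in step t (t >= 1): not dead in any step t' < t.\<close>
definition alive :: "('a \<Rightarrow> 'a \<Rightarrow> bool) \<Rightarrow> (nat \<Rightarrow> 'a) \<Rightarrow> nat \<Rightarrow> 'a \<Rightarrow> bool" where
  "alive E \<pi> t v \<longleftrightarrow> v \<notin> greedy_dead E \<pi> (t - 1)"

end

theory Submission imports Defs "HOL-Combinatorics.Transposition" begin

definition swp :: "(nat \<Rightarrow> 'a) \<Rightarrow> nat \<Rightarrow> nat \<Rightarrow> nat \<Rightarrow> 'a" where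
  "swp \<pi> a b = \<pi>(a := \<pi> b, b := \<pi> a)"

lemma swp_eq: "swp \<pi> a b = Fun.swap a b \<pi>"
  unfolding swp_def Fun.swap_def ..

lemma swp_apply: "swp \<pi> a b a = \<pi> b" "swp \<pi> a b b = \<pi> a" "i \<noteq> a \<Longrightarrow> i \<noteq> b \<Longrightarrow> swp \<pi> a b i = \<pi> i"
  unfolding swp_def by auto

lemma swp_swp[simp]: "swp (swp \<pi> a b) a b = \<pi>"
  unfolding swp_def by (rule ext) auto

lemma gd_prefix:
  "(\<And>i. 1 \<le> i \<Longrightarrow> i \<le> k \<Longrightarrow> \<pi> i = \<pi>' i) \<Longrightarrow> greedy_dead E \<pi> k = greedy_dead E \<pi>' k"
proof (induction k)
  case 0 then show ?case by simp
next
  case (Suc k)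
  then have "greedy_dead E \<pi> k = greedy_dead E \<pi>' k" by simp
  moreover have "\<pi> (Suc k) = \<pi>' (Suc k)" using Suc.prems by simp
  ultimately show ?case by simp
qed

lemma gd_mono_Suc: "greedy_dead E \<pi> k \<subseteq> greedy_dead E \<pi> (Suc k)"
  by auto

lemma gd_mono: "k \<le> k' \<Longrightarrow> greedy_dead E \<pi> k \<subseteq> greedy_dead E \<pi> k'"
proof (induction k' rule: dec_induct)
  case base then show ?case by simp
next
  case (step m) then show ?case using gd_mono_Suc[of E \<pi> m] by blast
qed

lemma gd_kill:
  assumes "\<pi> (Suc k) \<notin> greedy_dead E \<pi> k" "E u (\<pi> (Suc k))" "\<forall>u v. E u v \<longrightarrow> E v u"
  shows "u \<in> greedy_dead E \<pi> (Suc k)"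
proof -
  have "E (\<pi> (Suc k)) u" using assms(2,3) by blast
  then show ?thesis using assms(1) by simp
qed

definition psi :: "nat \<Rightarrow> nat \<Rightarrow> nat \<Rightarrow> real" where
  "psi n j x = Max ((\<lambda>y. real y * (1 - real y / real n) ^ j) ` {0..x})"

lemma psi_ge: "y \<le> x \<Longrightarrow> real y * (1 - real y / real n) ^ j \<le> psi n j x"
  unfolding psi_def by (intro Max_ge) auto

lemma psi_nonneg: "0 \<le> psi n j x"
  using psi_ge[of 0 x n j] by simp

lemma psi_attained: "\<exists>y\<le>x. psi n j x = real y * (1 - real y / real n) ^ j"
proof -
  have "psi n j x \<in> (\<lambda>y. real y * (1 - real y / real n) ^ j) ` {0..x}"
    unfolding psi_def by (intro Max_in) auto
  then show ?thesis by auto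
qed

lemma psi_mono: "x \<le> x' \<Longrightarrow> psi n j x \<le> psi n j x'"
  using psi_attained[of x n j] psi_ge[of _ x' n j] by force

lemma psi_0: "psi n 0 x = real x"
  using psi_attained[of x n 0] psi_ge[of x x n 0] by force

lemma psi_step:
  assumes "x \<le> n"
  shows "(1 - real x / real n) * psi n j x \<le> psi n (Suc j) x"
proof -
  obtain y where y: "y \<le> x" "psi n j x = real y * (1 - real y / real n) ^ j"
    using psi_attained by blast
  have "real y / real n \<le> real x / real n"
    using y(1) by (simp add: divide_right_mono)
  then have h: "1 - real x / real n \<le> 1 - real y / real n" by simp
  have h0: "0 \<le> 1 - real x / real n"
    using assms by (cases "n = 0") auto
  have h1: "0 \<le> 1 - real y / real n"
    using h h0 by linarith
  have "(1 - real x / real n) * psi n j x \<le> (1 - real y / real n) * psi n j x"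
    using h psi_nonneg by (simp add: mult_right_mono)
  also have "\<dots> = real y * (1 - real y / real n) ^ Suc j"
    using y(2) by simp
  also have "\<dots> \<le> psi n (Suc j) x" using psi_ge y(1) by blast
  finally show ?thesis .
qed

lemma psi_bound:
  assumes "x \<le> n" "j \<ge> 1" "n > 0"
  shows "psi n j x \<le> real n / (exp 1 * real j)"
proof -
  obtain y where y: "y \<le> x" "psi n j x = real y * (1 - real y / real n) ^ j"
    using psi_attained by blast
  define z where "z = real y / real n"
  have z0: "0 \<le> z" and z1: "z \<le> 1" using y(1) assms by (auto simp: z_def)
  have "(1 - z) ^ j \<le> exp (- z) ^ j"
    using z1 by (intro power_mono) (auto simp: exp_ge_add_one_self[of "-z", simplified])
  also have "\<dots> = exp (- (real j * z))" by (simp add: exp_of_nat_mult[symmetric])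
  finally have a: "(1 - z) ^ j \<le> exp (- (real j * z))" .
  have b: "real j * z \<le> exp (real j * z - 1)"
    using exp_ge_add_one_self[of "real j * z - 1"] by simp
  have "psi n j x = real n * z * (1 - z) ^ j" using y(2) assms by (simp add: z_def)
  also have "\<dots> \<le> real n * z * exp (- (real j * z))"
    using a z0 by (intro mult_left_mono) auto
  also have "\<dots> = real n / real j * ((real j * z) * exp (- (real j * z)))"
    using assms by (simp add: field_simps)
  also have "\<dots> \<le> real n / real j * exp (-1)"
  proof -
    have "(real j * z) * exp (- (real j * z)) \<le> exp (real j * z - 1) * exp (- (real j * z))"
      using b by (intro mult_right_mono) auto
    also have "exp (real j * z - 1) * exp (- (real j * z)) = exp (-1)"
      by (simp add: exp_add[symmetric])
    finally show ?thesis using assms by (intro mult_left_mono) auto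
  qed
  finally show ?thesis by (simp add: exp_minus field_simps)
qed

locale gsetup =
  fixes V :: "'a set" and E :: "'a \<Rightarrow> 'a \<Rightarrow> bool" and n :: nat and S P1 :: "nat set"
    and \<sigma> :: "nat \<Rightarrow> 'a" and u :: 'a
  assumes G: "simple_graph V E" and nV: "card V = n" and Sn: "S \<subseteq> {1..n}"
    and \<sigma>inj: "inj_on \<sigma> S" and \<sigma>V: "\<sigma> ` S \<subseteq> V" and P1n: "P1 \<subseteq> {1..n}" and P1S: "P1 \<inter> S = {}"
begin

definition "CC = bijections n V \<inter> {\<pi>. \<forall>i\<in>S. \<pi> i = \<sigma> i}"
definition "FF k = {Suc k..n} - S"
definition "AA \<pi> k = {v. E u v \<and> v \<notin> greedy_dead E \<pi> k} \<inter> \<pi> ` FF k"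
definition "jj k = card {t\<in>P1. k < t}"
definition "Phi \<pi> k = (if u \<notin> greedy_dead E \<pi> k then psi n (jj k) (card (AA \<pi> k)) else 0)"

lemma finV: "finite V" using G unfolding simple_graph_def by blast
lemma symE: "\<forall>a b. E a b \<longrightarrow> E b a" using G unfolding simple_graph_def by blast

lemma CC_finite: "finite CC"
proof -
  have "CC \<subseteq> {1..n} \<rightarrow>\<^sub>E V" unfolding CC_def bijections_def by blast
  moreover have "finite ({1..n} \<rightarrow>\<^sub>E V)" using finV by (intro finite_PiE) auto
  ultimately show ?thesis by (rule finite_subset)
qed

lemma CC_D: assumes "\<pi> \<in> CC"
  shows "\<pi> \<in> {1..n} \<rightarrow>\<^sub>E V" "bij_betw \<pi> {1..n} V" "\<And>i. i \<in> S \<Longrightarrow> \<pi> i = \<sigma> i"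
  using assms unfolding CC_def bijections_def by auto

lemma swp_CC:
  assumes "\<pi> \<in> CC" "a \<in> {1..n} - S" "b \<in> {1..n} - S"
  shows "swp \<pi> a b \<in> CC"
proof -
  have "swp \<pi> a b \<in> {1..n} \<rightarrow>\<^sub>E V"
    using CC_D(1)[OF assms(1)] assms(2,3) unfolding swp_def by (auto simp: PiE_def Pi_def extensional_def)
  moreover have "bij_betw (swp \<pi> a b) {1..n} V"
    using CC_D(2)[OF assms(1)] assms(2,3) unfolding swp_eq by (subst bij_betw_swap_iff) auto
  moreover have "\<forall>i\<in>S. swp \<pi> a b i = \<sigma> i"
  proof
    fix i assume i: "i \<in> S"
    then have "i \<noteq> a" "i \<noteq> b" using assms(2,3) by auto
    then have "swp \<pi> a b i = \<pi> i" by (rule swp_apply(3))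
    then show "swp \<pi> a b i = \<sigma> i" using CC_D(3)[OF assms(1) i] by simp
  qed
  ultimately show ?thesis unfolding CC_def bijections_def by auto
qed

lemma sum_swap_avg:
  assumes a: "a \<in> {1..n} - S" and T: "T \<subseteq> {1..n} - S" "T \<noteq> {}"
  shows "(\<Sum>\<pi>\<in>CC. g \<pi>) = (\<Sum>\<pi>\<in>CC. \<Sum>s\<in>T. g (swp \<pi> a s)) / real (card T)"
proof -
  have fT: "finite T" using T(1) finite_subset by blast
  have eq: "(\<Sum>\<pi>\<in>CC. g (swp \<pi> a s)) = (\<Sum>\<pi>\<in>CC. g \<pi>)" if s: "s \<in> T" for s
  proof -
    have "bij_betw (\<lambda>\<pi>. swp \<pi> a s) CC CC"
      by (rule bij_betw_byWitness[where f' = "\<lambda>\<pi>. swp \<pi> a s"])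
         (use swp_CC a s T(1) in auto)
    then show ?thesis by (rule sum.reindex_bij_betw)
  qed
  have "(\<Sum>\<pi>\<in>CC. \<Sum>s\<in>T. g (swp \<pi> a s)) = (\<Sum>s\<in>T. \<Sum>\<pi>\<in>CC. g (swp \<pi> a s))"
    by (rule sum.swap)
  also have "\<dots> = (\<Sum>s\<in>T. \<Sum>\<pi>\<in>CC. g \<pi>)" using eq by simp
  also have "\<dots> = real (card T) * (\<Sum>\<pi>\<in>CC. g \<pi>)" by simp
  finally show ?thesis using fT T(2) by simp
qed

lemma FF_sub: "FF k \<subseteq> {1..n} - S" unfolding FF_def by auto
lemma FF_finite: "finite (FF k)" unfolding FF_def by auto
lemma FF_card: "card (FF k) \<le> n"
proof -
  have "card (FF k) \<le> card {1..n}" using FF_sub by (intro card_mono) auto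
  then show ?thesis by simp
qed

lemma AA_finite: "finite (AA \<pi> k)"
  unfolding AA_def using FF_finite by auto

lemma card_AA_pre:
  assumes "\<pi> \<in> CC"
  shows "card {s\<in>FF k. \<pi> s \<in> AA \<pi> k} = card (AA \<pi> k)"
proof -
  have inj: "inj_on \<pi> (FF k)"
    using CC_D(2)[OF assms] FF_sub unfolding bij_betw_def by (meson Diff_subset inj_on_subset subset_trans)
  have "\<pi> ` {s\<in>FF k. \<pi> s \<in> AA \<pi> k} = AA \<pi> k" unfolding AA_def by auto
  moreover have "inj_on \<pi> {s\<in>FF k. \<pi> s \<in> AA \<pi> k}" using inj by (rule inj_on_subset) auto
  ultimately show ?thesis using card_image by metis
qed

lemma card_AA_le: "card (AA \<pi> k) \<le> card (FF k)"
proof -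
  have "card (AA \<pi> k) \<le> card (\<pi> ` FF k)" unfolding AA_def using FF_finite by (intro card_mono) auto
  also have "\<dots> \<le> card (FF k)" by (rule card_image_le[OF FF_finite])
  finally show ?thesis .
qed

lemma Phi_nonneg: "0 \<le> Phi \<pi> k" unfolding Phi_def using psi_nonneg by auto

lemma step_noP1:
  assumes "Suc k \<notin> P1"
  shows "Phi \<pi> (Suc k) \<le> Phi \<pi> k"
proof (cases "u \<in> greedy_dead E \<pi> (Suc k)")
  case True then show ?thesis using Phi_nonneg by (simp add: Phi_def)
next
  case False
  then have nk: "u \<notin> greedy_dead E \<pi> k" using gd_mono_Suc[of E \<pi> k] by blast
  have "{t\<in>P1. Suc k < t} = {t\<in>P1. k < t}" using assms by (auto, metis Suc_lessI)
  then have j: "jj (Suc k) = jj k" unfolding jj_def by simp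
  have "AA \<pi> (Suc k) \<subseteq> AA \<pi> k" unfolding AA_def FF_def using gd_mono_Suc[of E \<pi> k] by auto
  then have "card (AA \<pi> (Suc k)) \<le> card (AA \<pi> k)" using AA_finite by (intro card_mono)
  then show ?thesis using False nk j psi_mono by (simp add: Phi_def)
qed

end

context gsetup begin

lemma finP1: "finite P1" by (rule finite_subset[OF P1n]) simp

lemma swp_prefix:
  assumes "k < a" "k < s"
  shows "greedy_dead E (swp \<pi> a s) k = greedy_dead E \<pi> k"
  by (rule gd_prefix) (use assms in \<open>auto intro: swp_apply(3)\<close>)

lemma step_P1_pt:
  assumes pi: "\<pi> \<in> CC" and k: "Suc k \<in> P1"
  shows "(\<Sum>s\<in>FF k. Phi (swp \<pi> (Suc k) s) (Suc k)) \<le> real (card (FF k)) * Phi \<pi> k"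
proof (cases "u \<in> greedy_dead E \<pi> k")
  case True
  have "Phi (swp \<pi> (Suc k) s) (Suc k) = 0" if "s \<in> FF k" for s
  proof -
    have "greedy_dead E (swp \<pi> (Suc k) s) k = greedy_dead E \<pi> k"
      using that by (intro swp_prefix) (auto simp: FF_def)
    then have "u \<in> greedy_dead E (swp \<pi> (Suc k) s) (Suc k)" using True gd_mono_Suc[of E "swp \<pi> (Suc k) s" k] by blast
    then show ?thesis by (simp add: Phi_def)
  qed
  then show ?thesis using Phi_nonneg[of \<pi> k] by simp
next
  case False
  define a where "a = card (AA \<pi> k)"
  define T where "T = FF k"
  define T1 where "T1 = {s\<in>T. \<pi> s \<in> AA \<pi> k}"
  define j' where "j' = jj (Suc k)"
  have fT: "finite T" unfolding T_def by (rule FF_finite)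
  have cT1: "card T1 = a" unfolding T1_def a_def T_def by (rule card_AA_pre[OF pi])
  have T1T: "T1 \<subseteq> T" unfolding T1_def by auto
  have Phik: "Phi \<pi> k = psi n (Suc j') a"
  proof -
    have "{t\<in>P1. k < t} = insert (Suc k) {t\<in>P1. Suc k < t}" using k by auto
    moreover have "finite {t\<in>P1. Suc k < t}" by (rule finite_subset[OF _ finP1]) auto
    ultimately have "jj k = Suc j'" unfolding jj_def j'_def by simp
    then show ?thesis using False by (simp add: Phi_def a_def)
  qed
  have pref: "greedy_dead E (swp \<pi> (Suc k) s) k = greedy_dead E \<pi> k" if "s \<in> T" for s
    using that by (intro swp_prefix) (auto simp: FF_def T_def)
  have z: "Phi (swp \<pi> (Suc k) s) (Suc k) = 0" if s: "s \<in> T1" for s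
  proof -
    have v: "swp \<pi> (Suc k) s (Suc k) = \<pi> s" by (simp add: swp_def)
    have "\<pi> s \<in> AA \<pi> k" using s unfolding T1_def by auto
    then have "E u (\<pi> s)" "\<pi> s \<notin> greedy_dead E \<pi> k" unfolding AA_def by auto
    moreover have "s \<in> T" using s T1T by blast
    ultimately have "swp \<pi> (Suc k) s (Suc k) \<notin> greedy_dead E (swp \<pi> (Suc k) s) k"
        "E u (swp \<pi> (Suc k) s (Suc k))" using pref v by auto
    then have "u \<in> greedy_dead E (swp \<pi> (Suc k) s) (Suc k)"
      by (rule gd_kill[OF _ _ symE])
    then show ?thesis by (simp add: Phi_def)
  qed
  have b: "Phi (swp \<pi> (Suc k) s) (Suc k) \<le> psi n j' a" if s: "s \<in> T" for s
  proof (cases "u \<in> greedy_dead E (swp \<pi> (Suc k) s) (Suc k)")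
    case True then show ?thesis using psi_nonneg by (simp add: Phi_def)
  next
    case nd: False
    have "AA (swp \<pi> (Suc k) s) (Suc k) \<subseteq> AA \<pi> k"
    proof
      fix v assume "v \<in> AA (swp \<pi> (Suc k) s) (Suc k)"
      then obtain i where v: "E u v" "v \<notin> greedy_dead E (swp \<pi> (Suc k) s) (Suc k)"
        "i \<in> FF (Suc k)" "v = swp \<pi> (Suc k) s i" unfolding AA_def by auto
      have "v \<notin> greedy_dead E \<pi> k" using v(2) pref[OF s] gd_mono_Suc[of E "swp \<pi> (Suc k) s" k] by blast
      moreover have "v \<in> \<pi> ` FF k"
      proof (cases "i = s")
        case True
        then have "v = \<pi> (Suc k)" using v(4) by (simp add: swp_def)
        moreover have "Suc k \<in> FF k" using k P1n P1S by (auto simp: FF_def)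
        ultimately show ?thesis by auto
      next
        case False
        have "i \<noteq> Suc k" using v(3) by (auto simp: FF_def)
        then have "v = \<pi> i" using v(4) False swp_apply(3) by metis
        moreover have "i \<in> FF k" using v(3) by (auto simp: FF_def)
        ultimately show ?thesis by auto
      qed
      ultimately show "v \<in> AA \<pi> k" using v(1) unfolding AA_def by auto
    qed
    then have "card (AA (swp \<pi> (Suc k) s) (Suc k)) \<le> a" unfolding a_def using AA_finite by (intro card_mono)
    then show ?thesis using nd psi_mono by (simp add: Phi_def j'_def)
  qed
  have "(\<Sum>s\<in>T. Phi (swp \<pi> (Suc k) s) (Suc k))
      = (\<Sum>s\<in>T1. Phi (swp \<pi> (Suc k) s) (Suc k)) + (\<Sum>s\<in>T-T1. Phi (swp \<pi> (Suc k) s) (Suc k))"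
    using sum.subset_diff[OF T1T fT, of "\<lambda>s. Phi (swp \<pi> (Suc k) s) (Suc k)"] by linarith
  also have "\<dots> = (\<Sum>s\<in>T-T1. Phi (swp \<pi> (Suc k) s) (Suc k))" using z by simp
  also have "\<dots> \<le> (\<Sum>s\<in>T-T1. psi n j' a)" using b by (intro sum_mono) auto
  also have "\<dots> = (real (card T) - real a) * psi n j' a"
  proof -
    have c: "card (T - T1) = card T - card T1"
      by (rule card_Diff_subset[OF finite_subset[OF T1T fT] T1T])
    have "card T1 \<le> card T" by (rule card_mono[OF fT T1T])
    then show ?thesis using c cT1 by (simp add: of_nat_diff)
  qed
  also have "\<dots> \<le> real (card T) * ((1 - real a / real n) * psi n j' a)"
  proof -
    have cTn: "card T \<le> n" unfolding T_def by (rule FF_card)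
    have "real (card T) * (real a / real n) \<le> real a"
    proof (cases "n = 0")
      case True then show ?thesis by simp
    next
      case False
      then have "real (card T) * (real a / real n) = real a * (real (card T) / real n)" by simp
      also have "\<dots> \<le> real a * 1" using cTn False by (intro mult_left_mono) auto
      finally show ?thesis by simp
    qed
    then have "real (card T) - real a \<le> real (card T) * (1 - real a / real n)"
      by (simp add: algebra_simps)
    from mult_right_mono[OF this psi_nonneg[of n j' a]] show ?thesis by (simp add: mult.assoc)
  qed
  also have "\<dots> \<le> real (card T) * psi n (Suc j') a"
  proof -
    have "card T1 \<le> card T" by (rule card_mono[OF fT T1T])
    moreover have "card T \<le> n" unfolding T_def by (rule FF_card)
    ultimately have "a \<le> n" using cT1 by linarith
    then show ?thesis by (intro mult_left_mono psi_step) auto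
  qed
  finally show ?thesis using Phik by (simp add: T_def)
qed

lemma step_P1:
  assumes k: "Suc k \<in> P1"
  shows "(\<Sum>\<pi>\<in>CC. Phi \<pi> (Suc k)) \<le> (\<Sum>\<pi>\<in>CC. Phi \<pi> k)"
proof -
  have a: "Suc k \<in> {1..n} - S" using k P1n P1S by auto
  have ne: "FF k \<noteq> {}" using a by (auto simp: FF_def)
  have "(\<Sum>\<pi>\<in>CC. Phi \<pi> (Suc k)) = (\<Sum>\<pi>\<in>CC. \<Sum>s\<in>FF k. Phi (swp \<pi> (Suc k) s) (Suc k)) / real (card (FF k))"
    by (rule sum_swap_avg[OF a FF_sub ne])
  also have "\<dots> \<le> (\<Sum>\<pi>\<in>CC. real (card (FF k)) * Phi \<pi> k) / real (card (FF k))"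
    by (intro divide_right_mono sum_mono step_P1_pt k) auto
  also have "\<dots> = (\<Sum>\<pi>\<in>CC. Phi \<pi> k)"
    using ne FF_finite by (simp add: sum_distrib_left[symmetric])
  finally show ?thesis .
qed

lemma chain: "(\<Sum>\<pi>\<in>CC. Phi \<pi> k) \<le> (\<Sum>\<pi>\<in>CC. Phi \<pi> 0)"
proof (induction k)
  case 0 then show ?case by simp
next
  case (Suc k)
  have "(\<Sum>\<pi>\<in>CC. Phi \<pi> (Suc k)) \<le> (\<Sum>\<pi>\<in>CC. Phi \<pi> k)"
  proof (cases "Suc k \<in> P1")
    case True then show ?thesis by (rule step_P1)
  next
    case False then show ?thesis by (intro sum_mono step_noP1)
  qed
  then show ?case using Suc.IH by linarith
qed

lemma Phi0:
  assumes "P1 \<noteq> {}" "n > 0"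
  shows "Phi \<pi> 0 \<le> real n / (exp 1 * real (card P1))"
proof -
  have "{t\<in>P1. 0 < t} = P1" using P1n by auto
  then have j: "jj 0 = card P1" unfolding jj_def by simp
  have "card P1 \<ge> 1" using assms(1) finP1 by (simp add: Suc_le_eq card_gt_0_iff)
  moreover have "card (AA \<pi> 0) \<le> n" using card_AA_le FF_card order_trans by blast
  ultimately show ?thesis using psi_bound assms(2) j by (simp add: Phi_def)
qed

lemma final_count:
  assumes p1: "p1 \<in> S" "\<sigma> p1 = u" and p2: "p2 \<in> {1..n} - S" "t1 < p2" and j: "jj t1 = 0"
  shows "real (card (CC \<inter> {\<pi>. E (\<pi> p1) (\<pi> p2) \<and> \<pi> p1 \<notin> greedy_dead E \<pi> t1 \<and> \<pi> p2 \<notin> greedy_dead E \<pi> t1}))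
         \<le> (\<Sum>\<pi>\<in>CC. Phi \<pi> t1) / real (card (FF t1))"
proof -
  define Gd where "Gd = {\<pi>. E (\<pi> p1) (\<pi> p2) \<and> \<pi> p1 \<notin> greedy_dead E \<pi> t1 \<and> \<pi> p2 \<notin> greedy_dead E \<pi> t1}"
  define g :: "(nat \<Rightarrow> 'a) \<Rightarrow> real" where "g \<pi> = (if \<pi> \<in> Gd then 1 else 0)" for \<pi>
  have p2F: "p2 \<in> FF t1" using p2 by (auto simp: FF_def)
  then have ne: "FF t1 \<noteq> {}" by blast
  have "real (card (CC \<inter> Gd)) = (\<Sum>\<pi>\<in>CC. g \<pi>)"
    using CC_finite by (simp add: g_def sum.If_cases Int_def)
  also have "\<dots> = (\<Sum>\<pi>\<in>CC. \<Sum>s\<in>FF t1. g (swp \<pi> p2 s)) / real (card (FF t1))"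
    by (rule sum_swap_avg[OF p2(1) FF_sub ne(1)])
  also have "\<dots> \<le> (\<Sum>\<pi>\<in>CC. Phi \<pi> t1) / real (card (FF t1))"
  proof (intro divide_right_mono sum_mono)
    fix \<pi> assume pi: "\<pi> \<in> CC"
    have sub: "(FF t1 \<inter> {s. swp \<pi> p2 s \<in> Gd}) \<subseteq> (if u \<notin> greedy_dead E \<pi> t1 then {s\<in>FF t1. \<pi> s \<in> AA \<pi> t1} else {})"
    proof
      fix s assume s: "s \<in> (FF t1 \<inter> {s. swp \<pi> p2 s \<in> Gd})"
      then have sF: "s \<in> FF t1" and gs: "swp \<pi> p2 s \<in> Gd" by (auto simp: g_def split: if_splits)
      have pref: "greedy_dead E (swp \<pi> p2 s) t1 = greedy_dead E \<pi> t1"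
        using sF p2 by (intro swp_prefix) (auto simp: FF_def)
      have "p1 \<noteq> p2" "p1 \<noteq> s" using p1 p2 sF by (auto simp: FF_def)
      then have v1: "swp \<pi> p2 s p1 = u" using swp_apply(3) CC_D(3)[OF pi p1(1)] p1(2) by metis
      have v2: "swp \<pi> p2 s p2 = \<pi> s" by (rule swp_apply(1))
      have "E u (\<pi> s)" "u \<notin> greedy_dead E \<pi> t1" "\<pi> s \<notin> greedy_dead E \<pi> t1"
        using gs v1 v2 pref unfolding Gd_def by auto
      then show "s \<in> (if u \<notin> greedy_dead E \<pi> t1 then {s\<in>FF t1. \<pi> s \<in> AA \<pi> t1} else {})"
        using sF by (auto simp: AA_def)
    qed
    have "(\<Sum>s\<in>FF t1. g (swp \<pi> p2 s)) = real (card (FF t1 \<inter> {s. swp \<pi> p2 s \<in> Gd}))"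
      using FF_finite by (simp add: g_def sum.If_cases)
    also have "\<dots> \<le> real (card (if u \<notin> greedy_dead E \<pi> t1 then {s\<in>FF t1. \<pi> s \<in> AA \<pi> t1} else {}))"
      using sub FF_finite by (intro of_nat_mono card_mono) auto
    also have "\<dots> = Phi \<pi> t1"
      using card_AA_pre[OF pi, of t1] j by (simp add: Phi_def psi_0)
    finally show "(\<Sum>s\<in>FF t1. g (swp \<pi> p2 s)) \<le> Phi \<pi> t1" .
  qed auto
  finally show ?thesis unfolding Gd_def .
qed

end

lemma cond_pmf_of_set_eq:
  assumes fB: "finite B" and ne: "B \<inter> C \<noteq> {}"
  shows "cond_pmf (pmf_of_set B) C = pmf_of_set (B \<inter> C)"
proof (rule pmf_eqI)
  fix x
  have B: "B \<noteq> {}" using ne by blast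
  have ne': "set_pmf (pmf_of_set B) \<inter> C \<noteq> {}" using fB B ne by simp
  have fBC: "finite (B \<inter> C)" using fB by simp
  have cpos: "card (B \<inter> C) > 0" using fBC ne by (simp add: card_gt_0_iff)
  have cB: "card B > 0" using fB B by (simp add: card_gt_0_iff)
  have m: "measure_pmf.prob (pmf_of_set B) C = real (card (B \<inter> C)) / real (card B)"
    using fB B by (simp add: measure_pmf_of_set)
  show "pmf (cond_pmf (pmf_of_set B) C) x = pmf (pmf_of_set (B \<inter> C)) x"
    using cpos cB fB B ne by (simp add: pmf_cond[OF ne'] m indicator_def)
qed

context gsetup begin

lemma CC_nonempty: "CC \<noteq> {}"
proof -
  define Q where "Q = {1..n} - S"
  define W where "W = V - \<sigma> ` S"
  have fS: "finite S" using Sn finite_subset by blast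
  have cQ: "card Q = n - card S" unfolding Q_def using Sn by (simp add: card_Diff_subset fS)
  have cW: "card W = n - card S" unfolding W_def using \<sigma>V finV nV
    by (simp add: card_Diff_subset finite_subset card_image[OF \<sigma>inj])
  have "finite Q" "finite W" using finV unfolding Q_def W_def by auto
  then obtain h where h: "bij_betw h Q W" using cQ cW finite_same_card_bij by metis
  define \<pi> where "\<pi> i = (if i \<in> S then \<sigma> i else if i \<in> Q then h i else undefined)" for i
  have b1: "bij_betw \<pi> S (\<sigma> ` S)"
    using inj_on_imp_bij_betw[OF \<sigma>inj] by (rule bij_betw_cong[THEN iffD1, rotated]) (simp add: \<pi>_def)
  have b2: "bij_betw \<pi> Q W"
    using h by (rule bij_betw_cong[THEN iffD1, rotated]) (auto simp: \<pi>_def Q_def)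
  have "bij_betw \<pi> (S \<union> Q) (\<sigma> ` S \<union> W)"
    by (rule bij_betw_combine[OF b1 b2]) (auto simp: W_def)
  moreover have "S \<union> Q = {1..n}" using Sn unfolding Q_def by auto
  moreover have "\<sigma> ` S \<union> W = V" using \<sigma>V unfolding W_def by auto
  ultimately have bij: "bij_betw \<pi> {1..n} V" by simp
  have "\<pi> \<in> {1..n} \<rightarrow>\<^sub>E V"
    using bij Sn unfolding bij_betw_def by (auto simp: \<pi>_def Q_def PiE_def extensional_def)
  then have "\<pi> \<in> CC" using bij unfolding CC_def bijections_def by (auto simp: \<pi>_def)
  then show ?thesis by blast
qed

end

theorem mainTheorem5:
  fixes \<beta> :: real and V :: "'a set" and E :: "'a \<Rightarrow> 'a \<Rightarrow> bool" and n l :: nat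
    and P1 S :: "nat set" and p1 p2 :: nat and \<sigma> :: "nat \<Rightarrow> 'a"
  assumes beta: "0 < \<beta>" "\<beta> < 1"
    and G: "simple_graph V E" and nV: "card V = n"
    and P1: "P1 \<subseteq> {1..nat \<lfloor>\<beta> * real n\<rfloor>}" "card P1 = l" "l \<ge> 1"
    and p: "p1 \<in> {1..nat \<lfloor>\<beta> * real n\<rfloor>} - P1" "p2 \<in> {1..nat \<lfloor>\<beta> * real n\<rfloor>} - P1"
      "p1 < p2" "Max P1 < p1"
    and S: "S \<subseteq> {1..nat \<lfloor>\<beta> * real n\<rfloor>} - (P1 \<union> {p2})" "p1 \<in> S"
    and \<sigma>: "inj_on \<sigma> S" "\<sigma> ` S \<subseteq> V"
  shows "measure_pmf.prob
           (cond_pmf (pmf_of_set (bijections n V)) {\<pi>. \<forall>i\<in>S. \<pi> i = \<sigma> i})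
           {\<pi>. E (\<pi> p1) (\<pi> p2) \<and> alive E \<pi> (Max P1 + 1) (\<pi> p1) \<and> alive E \<pi> (Max P1 + 1) (\<pi> p2)}
         \<le> 1 / (exp 1 * real l * (1 - \<beta>))"
proof -
  define K where "K = nat \<lfloor>\<beta> * real n\<rfloor>"
  define t1 where "t1 = Max P1"
  have KR: "real K \<le> \<beta> * real n" unfolding K_def using beta
    by (metis floor_less_cancel mult_nonneg_nonneg nat_floor_neg not_less of_nat_0 of_nat_0_le_iff
        of_nat_floor order.strict_implies_order)
  have K1: "K \<ge> 1" using p(1) unfolding K_def by auto
  have npos: "n > 0"
  proof (rule ccontr)
    assume "\<not> n > 0" then have "n = 0" by simp
    then show False using KR K1 by simp
  qed
  have Kn: "K \<le> n"
  proof -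
    have "\<beta> * real n \<le> real n" using beta by (simp add: mult_left_le_one_le)
    then show ?thesis using KR by linarith
  qed
  have Sn: "S \<subseteq> {1..n}" using S(1) Kn unfolding K_def by auto
  have P1n: "P1 \<subseteq> {1..n}" using P1(1) Kn unfolding K_def by auto
  have P1S: "P1 \<inter> S = {}" using S(1) by auto
  interpret gsetup V E n S P1 \<sigma> "\<sigma> p1"
    by unfold_locales (use G nV Sn \<sigma> P1n P1S in auto)
  have finP1: "finite P1" by (rule finite_subset[OF P1n]) simp
  have P1ne: "P1 \<noteq> {}" using P1(2,3) by auto
  have t1P: "t1 \<in> P1" unfolding t1_def using finP1 P1ne by (rule Max_in)
  have t1K: "t1 \<le> K" using t1P P1(1) unfolding K_def by auto
  have jt: "jj t1 = 0"
  proof -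
    have "{t\<in>P1. t1 < t} = {}" unfolding t1_def using finP1 Max_ge by fastforce
    then show ?thesis unfolding jj_def by (metis card.empty)
  qed
  have p2S: "p2 \<in> {1..n} - S" using p(2) S(1) Kn unfolding K_def by auto
  have t1p2: "t1 < p2" using p(3,4) unfolding t1_def by simp
  define Ev where "Ev = {\<pi>. E (\<pi> p1) (\<pi> p2) \<and> \<pi> p1 \<notin> greedy_dead E \<pi> t1 \<and> \<pi> p2 \<notin> greedy_dead E \<pi> t1}"
  have EvEq: "{\<pi>. E (\<pi> p1) (\<pi> p2) \<and> alive E \<pi> (Max P1 + 1) (\<pi> p1) \<and> alive E \<pi> (Max P1 + 1) (\<pi> p2)} = Ev"
    unfolding Ev_def alive_def t1_def by simp
  have fB: "finite (bijections n V)"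
  proof -
    have "bijections n V \<subseteq> {1..n} \<rightarrow>\<^sub>E V" unfolding bijections_def by blast
    moreover have "finite ({1..n} \<rightarrow>\<^sub>E V)" using finV by (intro finite_PiE) auto
    ultimately show ?thesis by (rule finite_subset)
  qed
  have CCeq: "bijections n V \<inter> {\<pi>. \<forall>i\<in>S. \<pi> i = \<sigma> i} = CC" unfolding CC_def ..
  have cond: "cond_pmf (pmf_of_set (bijections n V)) {\<pi>. \<forall>i\<in>S. \<pi> i = \<sigma> i} = pmf_of_set CC"
    using cond_pmf_of_set_eq[OF fB] CC_nonempty CCeq by metis
  have cCC: "real (card CC) > 0" using CC_nonempty CC_finite by (simp add: card_gt_0_iff)
  have prob: "measure_pmf.prob (pmf_of_set CC) Ev = real (card (CC \<inter> Ev)) / real (card CC)"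
    using CC_nonempty CC_finite by (simp add: measure_pmf_of_set)
  define cF where "cF = card (FF t1)"
  have cFge: "real n - real K \<le> real cF"
  proof -
    have "{Suc K..n} \<subseteq> FF t1" using S(1) t1K unfolding FF_def K_def by auto
    then have "card {Suc K..n} \<le> cF" unfolding cF_def using FF_finite by (intro card_mono)
    then show ?thesis by simp
  qed
  have cFpos: "real cF \<ge> (1 - \<beta>) * real n" using cFge KR by (simp add: algebra_simps)
  have den: "(1 - \<beta>) * real n > 0" using beta npos by simp
  have "real (card (CC \<inter> Ev)) \<le> (\<Sum>\<pi>\<in>CC. Phi \<pi> t1) / real cF"
    unfolding Ev_def cF_def by (rule final_count[OF S(2) refl p2S t1p2 jt])
  also have "\<dots> \<le> (\<Sum>\<pi>\<in>CC. Phi \<pi> 0) / real cF"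
    by (intro divide_right_mono chain) auto
  also have "\<dots> \<le> (\<Sum>\<pi>\<in>CC. real n / (exp 1 * real l)) / real cF"
    using Phi0[OF P1ne npos] P1(2) by (intro divide_right_mono sum_mono) auto
  also have "\<dots> = real (card CC) * (real n / (exp 1 * real l)) / real cF" by simp
  finally have c0: "real (card (CC \<inter> Ev)) \<le> ((real n / (exp 1 * real l)) / real cF) * real (card CC)"
    by (simp add: mult.commute)
  have c: "real (card (CC \<inter> Ev)) / real (card CC) \<le> (real n / (exp 1 * real l)) / real cF"
    using cCC c0 by (subst pos_divide_le_eq) auto
  then have "real (card (CC \<inter> Ev)) / real (card CC) \<le> (real n / (exp 1 * real l)) / real cF" .
  also have "\<dots> \<le> (real n / (exp 1 * real l)) / ((1 - \<beta>) * real n)"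
    using cFpos den P1(3) by (intro divide_left_mono) auto
  also have "\<dots> = real n / (real n * (exp 1 * real l * (1 - \<beta>)))"
    by (simp add: divide_divide_eq_left mult_ac)
  also have "\<dots> = 1 / (exp 1 * real l * (1 - \<beta>))" using npos by simp
  finally show ?thesis using cond prob EvEq by simp
qed

end
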